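(* Let $w=w_1w_2\cdots w_n$ be a finite word over $\{0,1\}$ of length $n\ge 2$, and let $\hat e_w$ be the projection $\phi\mapsto\langle\phi,e_w\rangle e_w$. Then $\|K\hat e_w-\hat e_wK\|=1$, $\|L\hat e_w-\hat e_wL\|=1$, and therefore $\|[\mathcal D,\pi(\hat e_w)]\|=1$.
   Context: $\Omega=\{0,1\}^{\mathbb N}$ with the shift $\sigma$; for $a\in\{0,1\}$, $ax=(a,x_1,\dots)$. $\mu$ is the measure of maximal entropy (uniform Bernoulli product measure), $L^2(\mu)$ the real Hilbert space with inner product $\langle\cdot,\cdot\rangle$. For a finite word $v$, $[v]$ is the cylinder of sequences beginning with $v$, $\chi_{[v]}$ its indicator, $\ell(v)$ its length, and $v0,v1$ the concatenations. For a nonempty word $w$, $e_w=2^{\ell(w)/2}(\chi_{[w1]}-\chi_{[w0]})$. Ruelle operator $L\phi(x)=\frac12(\phi(0x)+\phi(1x))$; Koopman operator $K\phi=\phi\circ\sigma$. On $\mathcal H=L^2(\mu)\times L^2(\mu)$ (norm $|(\phi_1,\phi_2)|^2=|\phi_1|^2+|\phi_2|^2$), $\mathcal D=\begin{pmatrix}0&K\\ L&0\end{pmatrix}$ and $\pi(A)=\begin{pmatrix}A&0\\0&A\end{pmatrix}$ for bounded $A$ on $L^2(\mu)$; $[\mathcal D,\pi(A)]=\mathcal D\pi(A)-\pi(A)\mathcal D$. $\|\cdot\|$ is the operator norm. *)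

theory Defs
  imports "HOL-Probability.Probability"
begin

text \<open>Omega = {0,1}^N is modelled as nat => bool (False = 0, True = 1);
  the coordinate x_1 of the paper is x 0.\<close>

type_synonym seq = "nat \<Rightarrow> bool"

definition mme :: "seq measure" where
  "mme = PiM UNIV (\<lambda>_::nat. measure_pmf (bernoulli_pmf (1/2)))"

definition shift :: "seq \<Rightarrow> seq" where
  "shift x = (\<lambda>n. x (Suc n))"

definition prepend :: "bool \<Rightarrow> seq \<Rightarrow> seq" where
  "prepend a x = case_nat a x"

definition Koop :: "(seq \<Rightarrow> real) \<Rightarrow> seq \<Rightarrow> real" where
  "Koop \<phi> = \<phi> \<circ> shift"

definition Ruelle :: "(seq \<Rightarrow> real) \<Rightarrow> seq \<Rightarrow> real" where
  "Ruelle \<phi> x = (\<phi> (prepend False x) + \<phi> (prepend True x)) / 2"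

definition cylinder :: "bool list \<Rightarrow> seq set" where
  "cylinder v = {x. \<forall>i<length v. x i = v ! i}"

definition ew :: "bool list \<Rightarrow> seq \<Rightarrow> real" where
  "ew w x = 2 powr (real (length w) / 2) *
     (indicator (cylinder (w @ [True])) x - indicator (cylinder (w @ [False])) x)"

definition L2 :: "(seq \<Rightarrow> real) set" where
  "L2 = {f. f \<in> borel_measurable mme \<and> integrable mme (\<lambda>x. (f x)\<^sup>2)}"

definition L2_inner :: "(seq \<Rightarrow> real) \<Rightarrow> (seq \<Rightarrow> real) \<Rightarrow> real" where
  "L2_inner f g = (\<integral>x. f x * g x \<partial>mme)"

definition L2_norm :: "(seq \<Rightarrow> real) \<Rightarrow> real" where
  "L2_norm f = sqrt (\<integral>x. (f x)\<^sup>2 \<partial>mme)"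

definition proj_ew :: "bool list \<Rightarrow> (seq \<Rightarrow> real) \<Rightarrow> seq \<Rightarrow> real" where
  "proj_ew w \<phi> = (\<lambda>x. L2_inner \<phi> (ew w) * ew w x)"

definition opnorm :: "((seq \<Rightarrow> real) \<Rightarrow> seq \<Rightarrow> real) \<Rightarrow> real" where
  "opnorm T = Sup {L2_norm (T \<phi>) | \<phi>. \<phi> \<in> L2 \<and> L2_norm \<phi> \<le> 1}"

type_synonym hvec = "(seq \<Rightarrow> real) \<times> (seq \<Rightarrow> real)"

definition H_norm :: "hvec \<Rightarrow> real" where
  "H_norm p = sqrt ((L2_norm (fst p))\<^sup>2 + (L2_norm (snd p))\<^sup>2)"

definition H_opnorm :: "(hvec \<Rightarrow> hvec) \<Rightarrow> real" where
  "H_opnorm T = Sup {H_norm (T p) | p. fst p \<in> L2 \<and> snd p \<in> L2 \<and> H_norm p \<le> 1}"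

definition Dirac :: "hvec \<Rightarrow> hvec" where
  "Dirac p = (Koop (snd p), Ruelle (fst p))"

definition rep :: "((seq \<Rightarrow> real) \<Rightarrow> seq \<Rightarrow> real) \<Rightarrow> hvec \<Rightarrow> hvec" where
  "rep A p = (A (fst p), A (snd p))"

definition H_comm :: "(hvec \<Rightarrow> hvec) \<Rightarrow> (hvec \<Rightarrow> hvec) \<Rightarrow> hvec \<Rightarrow> hvec" where
  "H_comm S T p = (let a = S (T p); b = T (S p) in
     (\<lambda>x. fst a x - fst b x, \<lambda>x. snd a x - snd b x))"

end

theory Submission
  imports Defs
begin

abbreviation BB :: "bool measure" where "BB \<equiv> measure_pmf (bernoulli_pmf (1/2))"

interpretation SS: sequence_space BB
  by unfold_locales

lemma mme_eq: "mme = SS.S" unfolding mme_def by simp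

lemma sets_BB[simp]: "sets BB = UNIV" by simp
lemma space_BB[simp]: "space BB = UNIV" by simp

lemma cn_meas[measurable]: "(\<lambda>(s, \<omega>). case_nat s \<omega>) \<in> measurable (BB \<Otimes>\<^sub>M mme) mme"
  unfolding mme_eq by measurable

lemma PiM_iter': "distr (BB \<Otimes>\<^sub>M mme) mme (\<lambda>(s, \<omega>). case_nat s \<omega>) = mme"
  unfolding mme_eq by (rule SS.PiM_iter)

lemma prepend_meas[measurable]: "prepend a \<in> measurable mme mme"
proof -
  have "(\<lambda>y. (\<lambda>(s, \<omega>). case_nat s \<omega>) (a, y)) \<in> measurable mme mme"
    by measurable
  then show ?thesis unfolding prepend_def by simp
qed

lemma shift_meas[measurable]: "shift \<in> measurable mme mme"
  unfolding shift_def mme_eq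
  by (rule measurable_PiM_single') (auto simp: space_PiM)

lemma space_mme[simp]: "space mme = UNIV" unfolding mme_eq by (simp add: space_PiM)

lemma prob_mme: "prob_space mme" unfolding mme_eq by (rule SS.prob_space_axioms)


interpretation PB: pair_sigma_finite BB mme
proof -
  interpret P: prob_space mme by (rule prob_mme)
  show "pair_sigma_finite BB mme" by unfold_locales
qed

lemma ruelle_meas[measurable]:
  assumes [measurable]: "f \<in> borel_measurable mme"
  shows "Ruelle f \<in> borel_measurable mme"
  unfolding Ruelle_def by measurable

lemma lemmaR:
  fixes f :: "seq \<Rightarrow> real"
  assumes [measurable]: "f \<in> borel_measurable mme" and int: "integrable mme f"
  shows "integrable mme (Ruelle f)" "integral\<^sup>L mme (Ruelle f) = integral\<^sup>L mme f"
proof -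
  have i2: "integrable (BB \<Otimes>\<^sub>M mme) (\<lambda>(s, \<omega>). f (case_nat s \<omega>))"
    using int integrable_distr_eq[of "(\<lambda>(s, \<omega>). case_nat s \<omega>)" "BB \<Otimes>\<^sub>M mme" mme f, unfolded PiM_iter']
    by (simp add: split_beta')
  have eq: "\<And>y. (\<integral>x. f (case_nat x y) \<partial>BB) = Ruelle f y"
    unfolding Ruelle_def prepend_def by simp
  show "integrable mme (Ruelle f)"
    using PB.integrable_snd[of "\<lambda>s \<omega>. f (case_nat s \<omega>)"] i2 eq by simp
  have "integral\<^sup>L mme (Ruelle f) = integral\<^sup>L (BB \<Otimes>\<^sub>M mme) (\<lambda>(s, \<omega>). f (case_nat s \<omega>))"
    using PB.integral_snd[of "\<lambda>s \<omega>. f (case_nat s \<omega>)"] i2 eq by simp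
  also have "\<dots> = integral\<^sup>L mme f"
    using integral_distr[of "(\<lambda>(s, \<omega>). case_nat s \<omega>)" "BB \<Otimes>\<^sub>M mme" mme f, unfolded PiM_iter']
    by (simp add: split_beta')
  finally show "integral\<^sup>L mme (Ruelle f) = integral\<^sup>L mme f" .
qed

lemma distr_snd: "distr (BB \<Otimes>\<^sub>M mme) mme snd = mme"
proof (rule measure_eqI)
  fix A assume A: "A \<in> sets (distr (BB \<Otimes>\<^sub>M mme) mme snd)"
  then have A': "A \<in> sets mme" by simp
  have "emeasure (distr (BB \<Otimes>\<^sub>M mme) mme snd) A = emeasure (BB \<Otimes>\<^sub>M mme) (UNIV \<times> A)"
    using A' by (subst emeasure_distr) (auto intro!: arg_cong[where f="emeasure _"] simp: space_pair_measure)
  also have "\<dots> = emeasure BB UNIV * emeasure mme A"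
    using A' by (intro sigma_finite_measure.emeasure_pair_measure_Times) (auto simp: prob_mme prob_space_imp_sigma_finite)
  also have "\<dots> = emeasure mme A"
    using prob_space.emeasure_space_1[of BB] by (simp add: prob_space_measure_pmf)
  finally show "emeasure (distr (BB \<Otimes>\<^sub>M mme) mme snd) A = emeasure mme A" .
qed simp

lemma shift_pres: "distr mme mme shift = mme"
proof -
  have "distr mme mme shift = distr (BB \<Otimes>\<^sub>M mme) mme (shift \<circ> (\<lambda>(s, \<omega>). case_nat s \<omega>))"
    using distr_distr[of shift mme mme "(\<lambda>(s, \<omega>). case_nat s \<omega>)" "BB \<Otimes>\<^sub>M mme"]
    by (simp add: PiM_iter')
  also have "\<dots> = distr (BB \<Otimes>\<^sub>M mme) mme snd"
    by (rule distr_cong) (auto simp: shift_def)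
  finally show ?thesis using distr_snd by simp
qed

lemma koop_int:
  fixes g :: "seq \<Rightarrow> real"
  assumes [measurable]: "g \<in> borel_measurable mme"
  shows "integrable mme (\<lambda>x. g (shift x)) \<longleftrightarrow> integrable mme g"
    "integral\<^sup>L mme (\<lambda>x. g (shift x)) = integral\<^sup>L mme g"
  using integrable_distr_eq[of shift mme mme g] integral_distr[of shift mme mme g]
  by (auto simp: shift_pres)


lemma cyl_sets[measurable]: "cylinder v \<in> sets mme"
proof -
  have "cylinder v = (\<Inter>i\<in>{..<length v}. {x \<in> space mme. x i = v ! i})"
    by (auto simp: cylinder_def)
  also have "\<dots> \<in> sets mme"
  proof (cases "v = []")
    case True then show ?thesis using sets.top[of mme] by simp
  next
    case False
    have "\<And>i. (\<lambda>x. x i) \<in> measurable mme BB" unfolding mme_eq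
      by (rule measurable_component_singleton) simp
    then have "\<And>i. {x \<in> space mme. x i = v ! i} \<in> sets mme"
      by measurable
    then show ?thesis using False by (intro sets.finite_INT) auto
  qed
  finally show ?thesis .
qed

lemma ind_meas[measurable]: "indicator (cylinder v) \<in> borel_measurable mme"
  by measurable

lemma ew_meas[measurable]: "ew w \<in> borel_measurable mme"
  unfolding ew_def by measurable

lemma bdd_int:
  fixes f :: "seq \<Rightarrow> real"
  assumes "f \<in> borel_measurable mme" "\<And>x. \<bar>f x\<bar> \<le> C"
  shows "integrable mme f"
proof -
  interpret P: prob_space mme by (rule prob_mme)
  show ?thesis using assms by (intro P.integrable_const_bound[where B=C]) auto
qed

lemma prepend_cyl: "prepend a y \<in> cylinder (b # v) \<longleftrightarrow> a = b \<and> y \<in> cylinder v"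
  unfolding cylinder_def prepend_def
  by (auto simp: less_Suc_eq_0_disj)

lemma ruelle_ind: "Ruelle (indicator (cylinder (b # v))) = (\<lambda>y. indicator (cylinder v) y / 2)"
  unfolding Ruelle_def by (cases b) (auto simp: indicator_def prepend_cyl fun_eq_iff)

lemma ind_int: "integral\<^sup>L mme (indicator (cylinder v) :: seq \<Rightarrow> real) = (1/2) ^ length v"
proof (induction v)
  case Nil
  interpret P: prob_space mme by (rule prob_mme)
  have "cylinder [] = UNIV" by (simp add: cylinder_def)
  then show ?case using P.prob_space by simp
next
  case (Cons b v)
  have "integral\<^sup>L mme (indicator (cylinder (b # v)) :: seq \<Rightarrow> real)
      = integral\<^sup>L mme (Ruelle (indicator (cylinder (b # v))))"
    by (rule lemmaR(2)[symmetric]) (auto intro!: bdd_int[where C=1])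
  also have "\<dots> = integral\<^sup>L mme (indicator (cylinder v) :: seq \<Rightarrow> real) / 2"
    unfolding ruelle_ind by simp
  finally show ?case using Cons by simp
qed

lemma meas_cyl: "measure mme (cylinder v) = (1/2) ^ length v"
  using ind_int[of v] by simp

lemma cyl_bit: "x \<in> cylinder (w @ [b]) \<Longrightarrow> x (length w) = b"
  unfolding cylinder_def by (drule CollectD, drule spec[where x="length w"]) simp
lemma cyl_TF: "x \<in> cylinder (w @ [True]) \<Longrightarrow> x \<notin> cylinder (w @ [False])"
  using cyl_bit[of x w True] cyl_bit[of x w False] by auto

lemma cyl_snoc: "x \<in> cylinder (w @ [b]) \<Longrightarrow> x \<in> cylinder w"
  unfolding cylinder_def by (auto simp: nth_append)

lemma ew_out: "x \<notin> cylinder w \<Longrightarrow> ew w x = 0"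
  unfolding ew_def using cyl_snoc by (auto simp: indicator_def)

lemma ew_sq: "(ew w x)\<^sup>2 = 2 ^ length w *
   (indicator (cylinder (w @ [True])) x + indicator (cylinder (w @ [False])) x)"
proof -
  have "(2 powr (real (length w) / 2))\<^sup>2 = 2 powr (real (length w) / 2 + real (length w) / 2)"
    unfolding power2_eq_square powr_add ..
  also have "\<dots> = 2 powr (real (length w))" by simp
  also have "\<dots> = 2 ^ length w" by (rule powr_realpow) simp
  finally have p: "(2 powr (real (length w) / 2))\<^sup>2 = 2 ^ length w" .
  show ?thesis unfolding ew_def power_mult_distrib p
    using cyl_TF[of x w] by (auto simp: indicator_def)
qed

lemma ew_bound: "\<bar>ew w x\<bar> \<le> 2 powr (real (length w) / 2)"
  unfolding ew_def using cyl_TF[of x w] by (auto simp: indicator_def abs_mult)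

lemma ew_int_sq: "integral\<^sup>L mme (\<lambda>x. (ew w x)\<^sup>2) = 1"
proof -
  have i: "integrable mme (indicator (cylinder v) :: seq \<Rightarrow> real)" for v
    by (auto intro!: bdd_int[where C=1])
  show ?thesis unfolding ew_sq
    by (simp add: i meas_cyl power_add power_divide)
qed

lemma ew_int: "integral\<^sup>L mme (ew w) = 0"
proof -
  have i: "integrable mme (indicator (cylinder v) :: seq \<Rightarrow> real)" for v
    by (auto intro!: bdd_int[where C=1])
  show ?thesis unfolding ew_def
    by (simp add: i meas_cyl)
qed

definition dep :: "nat \<Rightarrow> (seq \<Rightarrow> real) \<Rightarrow> bool" where
  "dep n g \<longleftrightarrow> (\<forall>x y. (\<forall>i<n. x i = y i) \<longrightarrow> g x = g y)"

lemma ew_orth: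
  assumes "dep (length w) g"
  shows "integral\<^sup>L mme (\<lambda>x. ew w x * g x) = 0"
proof -
  define x0 :: seq where "x0 = (\<lambda>i. if i < length w then w ! i else False)"
  have x0: "x0 \<in> cylinder w" by (simp add: x0_def cylinder_def)
  have "\<And>x. ew w x * g x = g x0 * ew w x"
  proof -
    fix x
    show "ew w x * g x = g x0 * ew w x"
    proof (cases "x \<in> cylinder w")
      case True
      then have "\<forall>i<length w. x i = x0 i" using x0 unfolding cylinder_def by simp
      then have "g x = g x0" using assms unfolding dep_def by blast
      then show ?thesis by simp
    qed (simp add: ew_out)
  qed
  then have "(\<lambda>x. ew w x * g x) = (\<lambda>x. g x0 * ew w x)" by (intro ext)
  then have "integral\<^sup>L mme (\<lambda>x. ew w x * g x) = integral\<^sup>L mme (\<lambda>x. g x0 * ew w x)"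
    by (rule arg_cong)
  also have "\<dots> = g x0 * integral\<^sup>L mme (ew w)" by (rule integral_mult_right_zero)
  finally show ?thesis by (simp add: ew_int)
qed

lemma cyl_dep: "(\<forall>i<length v. x i = y i) \<Longrightarrow> (x \<in> cylinder v \<longleftrightarrow> y \<in> cylinder v)"
  by (simp add: cylinder_def)

lemma dep_ew: "dep (Suc (length w)) (ew w)"
  unfolding dep_def
proof (intro allI impI)
  fix x y :: seq assume h: "\<forall>i<Suc (length w). x i = y i"
  then have "x \<in> cylinder (w @ [b]) \<longleftrightarrow> y \<in> cylinder (w @ [b])" for b
    by (intro cyl_dep) simp
  then show "ew w x = ew w y" unfolding ew_def indicator_def by simp
qed

lemma dep_ruelle:
  assumes "dep (Suc n) g" shows "dep n (Ruelle g)"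
  unfolding dep_def
proof (intro allI impI)
  fix x y :: seq assume h: "\<forall>i<n. x i = y i"
  have "\<forall>i<Suc n. prepend a x i = prepend a y i" for a
  proof (intro allI impI)
    fix i assume "i < Suc n" then show "prepend a x i = prepend a y i"
      using h unfolding prepend_def by (cases i) auto
  qed
  then have "g (prepend a x) = g (prepend a y)" for a
    using assms unfolding dep_def by blast
  then show "Ruelle g x = Ruelle g y" unfolding Ruelle_def by simp
qed


lemma L2_meas: "f \<in> L2 \<Longrightarrow> f \<in> borel_measurable mme"
  by (simp add: L2_def)

lemma L2_sq: "f \<in> L2 \<Longrightarrow> integrable mme (\<lambda>x. (f x)\<^sup>2)"
  by (simp add: L2_def)

lemma L2_prod:
  assumes "f \<in> L2" "g \<in> L2"
  shows "integrable mme (\<lambda>x. f x * g x)"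
proof (rule Bochner_Integration.integrable_bound)
  show "integrable mme (\<lambda>x. (f x)\<^sup>2 + (g x)\<^sup>2)" using assms by (simp add: L2_sq)
  have [measurable]: "f \<in> borel_measurable mme" "g \<in> borel_measurable mme"
    using assms by (simp_all add: L2_def)
  show "(\<lambda>x. f x * g x) \<in> borel_measurable mme" by measurable
  have "\<And>x. \<bar>f x * g x\<bar> \<le> (f x)\<^sup>2 + (g x)\<^sup>2"
  proof -
    fix x
    have "0 \<le> (\<bar>f x\<bar> - \<bar>g x\<bar>)\<^sup>2" by simp
    then have "2 * (\<bar>f x\<bar> * \<bar>g x\<bar>) \<le> (f x)\<^sup>2 + (g x)\<^sup>2"
      by (simp add: power2_eq_square algebra_simps)
    moreover have "0 \<le> \<bar>f x\<bar> * \<bar>g x\<bar>" by simp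
    ultimately have "\<bar>f x\<bar> * \<bar>g x\<bar> \<le> (f x)\<^sup>2 + (g x)\<^sup>2" by linarith
    then show "\<bar>f x * g x\<bar> \<le> (f x)\<^sup>2 + (g x)\<^sup>2" by (simp add: abs_mult)
  qed
  then show "AE x in mme. norm (f x * g x) \<le> norm ((f x)\<^sup>2 + (g x)\<^sup>2)"
    by (auto intro!: AE_I2)
qed

lemma bdd_L2:
  assumes "f \<in> borel_measurable mme" "\<And>x. \<bar>f x\<bar> \<le> C"
  shows "f \<in> L2"
proof -
  have "\<bar>(f x)\<^sup>2\<bar> \<le> C\<^sup>2" for x
  proof -
    have "\<bar>f x\<bar> \<le> \<bar>C\<bar>" using assms(2)[of x] by linarith
    then have "(f x)\<^sup>2 \<le> C\<^sup>2" by (simp add: abs_le_square_iff)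
    then show ?thesis by simp
  qed
  then have "integrable mme (\<lambda>x. (f x)\<^sup>2)"
    using assms(1) by (intro bdd_int[where C="C\<^sup>2"]) auto
  then show ?thesis using assms by (simp add: L2_def)
qed

lemma const_L2: "(\<lambda>x. c) \<in> L2"
  by (rule bdd_L2[where C="\<bar>c\<bar>"]) auto

lemma L2_int: "f \<in> L2 \<Longrightarrow> integrable mme f"
  using L2_prod[of f "\<lambda>x. 1"] const_L2 by simp

lemma shift_prepend[simp]: "shift (prepend a y) = y"
  by (simp add: shift_def prepend_def)

lemma koop_L2:
  assumes f: "f \<in> L2" shows "(\<lambda>x. f (shift x)) \<in> L2"
proof -
  have [measurable]: "f \<in> borel_measurable mme" using f by (simp add: L2_def)
  have "integrable mme (\<lambda>x. (f (shift x))\<^sup>2)"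
    using koop_int(1)[of "\<lambda>x. (f x)\<^sup>2"] L2_sq[OF f] by simp
  then show ?thesis unfolding L2_def by simp
qed

lemma ruelle_L2:
  assumes f: "f \<in> L2" shows "Ruelle f \<in> L2"
proof -
  have [measurable]: "f \<in> borel_measurable mme" using f by (simp add: L2_def)
  have i: "integrable mme (Ruelle (\<lambda>x. (f x)\<^sup>2))"
    using lemmaR(1)[of "\<lambda>x. (f x)\<^sup>2"] L2_sq[OF f] by simp
  have "integrable mme (\<lambda>x. (Ruelle f x)\<^sup>2)"
  proof (rule Bochner_Integration.integrable_bound[OF i])
    show "(\<lambda>x. (Ruelle f x)\<^sup>2) \<in> borel_measurable mme" by measurable
    have "\<And>x. (Ruelle f x)\<^sup>2 \<le> Ruelle (\<lambda>x. (f x)\<^sup>2) x"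
    proof -
      fix x
      have "0 \<le> (f (prepend False x) - f (prepend True x))\<^sup>2" by simp
      then show "(Ruelle f x)\<^sup>2 \<le> Ruelle (\<lambda>x. (f x)\<^sup>2) x"
        unfolding Ruelle_def by (simp add: power2_eq_square field_simps)
    qed
    moreover have "\<And>x. 0 \<le> Ruelle (\<lambda>x. (f x)\<^sup>2) x" unfolding Ruelle_def by simp
    ultimately show "AE x in mme. norm ((Ruelle f x)\<^sup>2) \<le> norm (Ruelle (\<lambda>x. (f x)\<^sup>2) x)"
      by (auto intro!: AE_I2)
  qed
  then show ?thesis unfolding L2_def by simp
qed

lemma adj1:
  assumes f: "f \<in> L2" and g: "g \<in> L2"
  shows "L2_inner (\<lambda>x. f (shift x)) g = L2_inner f (Ruelle g)"
proof -
  have [measurable]: "f \<in> borel_measurable mme" "g \<in> borel_measurable mme"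
    using f g by (simp_all add: L2_def)
  have i: "integrable mme (\<lambda>x. f (shift x) * g x)"
    using L2_prod[OF koop_L2[OF f] g] .
  have "Ruelle (\<lambda>x. f (shift x) * g x) = (\<lambda>y. f y * Ruelle g y)"
    unfolding Ruelle_def by (simp add: fun_eq_iff field_simps)
  then show ?thesis unfolding L2_inner_def
    using lemmaR(2)[of "\<lambda>x. f (shift x) * g x"] i by simp
qed

lemma adj2:
  assumes f: "f \<in> L2" and g: "g \<in> L2"
  shows "L2_inner (Ruelle f) g = L2_inner f (\<lambda>x. g (shift x))"
proof -
  have [measurable]: "f \<in> borel_measurable mme" "g \<in> borel_measurable mme"
    using f g by (simp_all add: L2_def)
  have i: "integrable mme (\<lambda>x. f x * g (shift x))"
    using L2_prod[OF f koop_L2[OF g]] .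
  have "Ruelle (\<lambda>x. f x * g (shift x)) = (\<lambda>y. Ruelle f y * g y)"
    unfolding Ruelle_def by (simp add: fun_eq_iff field_simps)
  then show ?thesis unfolding L2_inner_def
    using lemmaR(2)[of "\<lambda>x. f x * g (shift x)"] i by simp
qed

lemma norm_sq: "(L2_norm f)\<^sup>2 = L2_inner f f"
  unfolding L2_norm_def L2_inner_def
  by (simp add: power2_eq_square[symmetric])

lemma bessel:
  assumes f: "f \<in> L2" and v: "v \<in> L2" and a: "a \<in> L2"
    and vv: "L2_inner v v = 1" and va: "L2_inner v a = 0" and aa: "L2_inner a a \<le> 1"
  shows "(L2_inner f v)\<^sup>2 + (L2_inner f a)\<^sup>2 \<le> L2_inner f f"
proof -
  define s where "s = L2_inner f v"
  define t where "t = L2_inner f a"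
  have i1: "integrable mme (\<lambda>x. f x * f x)" using L2_prod[OF f f] .
  have i2: "integrable mme (\<lambda>x. f x * v x)" using L2_prod[OF f v] .
  have i3: "integrable mme (\<lambda>x. f x * a x)" using L2_prod[OF f a] .
  have i4: "integrable mme (\<lambda>x. v x * v x)" using L2_prod[OF v v] .
  have i5: "integrable mme (\<lambda>x. v x * a x)" using L2_prod[OF v a] .
  have i6: "integrable mme (\<lambda>x. a x * a x)" using L2_prod[OF a a] .
  have eq: "(\<lambda>x. (f x - s * v x - t * a x)\<^sup>2) = (\<lambda>x. f x * f x - 2 * s * (f x * v x) - 2 * t * (f x * a x)
     + s\<^sup>2 * (v x * v x) + 2 * s * t * (v x * a x) + t\<^sup>2 * (a x * a x))"
    by (simp add: fun_eq_iff power2_eq_square algebra_simps)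
  have "integral\<^sup>L mme (\<lambda>x. (f x - s * v x - t * a x)\<^sup>2) =
      L2_inner f f - 2 * s * L2_inner f v - 2 * t * L2_inner f a + s\<^sup>2 * L2_inner v v + 2 * s * t * L2_inner v a + t\<^sup>2 * L2_inner a a"
    unfolding eq unfolding L2_inner_def
    using i1 i2 i3 i4 i5 i6 by (simp add: integral_add integral_diff)
  moreover have "0 \<le> integral\<^sup>L mme (\<lambda>x. (f x - s * v x - t * a x)\<^sup>2)" by simp
  moreover have "t\<^sup>2 * L2_inner a a \<le> t\<^sup>2" using aa by (simp add: mult_left_le)
  ultimately show ?thesis using vv va unfolding s_def[symmetric] t_def[symmetric]
    by (simp add: power2_eq_square s_def[symmetric] t_def[symmetric])
qed

lemma norm_comb:
  assumes u1: "u1 \<in> L2" and u2: "u2 \<in> L2"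
    and o: "L2_inner u1 u2 = 0" and n2: "L2_inner u2 u2 = 1"
  shows "(L2_norm (\<lambda>x. c * u1 x - d * u2 x))\<^sup>2 = c\<^sup>2 * L2_inner u1 u1 + d\<^sup>2"
proof -
  have i4: "integrable mme (\<lambda>x. u1 x * u1 x)" using L2_prod[OF u1 u1] .
  have i5: "integrable mme (\<lambda>x. u1 x * u2 x)" using L2_prod[OF u1 u2] .
  have i6: "integrable mme (\<lambda>x. u2 x * u2 x)" using L2_prod[OF u2 u2] .
  have eq: "(\<lambda>x. (c * u1 x - d * u2 x) * (c * u1 x - d * u2 x)) =
     (\<lambda>x. c\<^sup>2 * (u1 x * u1 x) - 2 * c * d * (u1 x * u2 x) + d\<^sup>2 * (u2 x * u2 x))"
    by (simp add: fun_eq_iff power2_eq_square algebra_simps)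
  show ?thesis unfolding norm_sq unfolding L2_inner_def eq
    using i4 i5 i6 o n2 unfolding L2_inner_def by (simp add: integral_add integral_diff)
qed


lemma ruelle_sq_le: "(Ruelle f x)\<^sup>2 \<le> Ruelle (\<lambda>x. (f x)\<^sup>2) x"
proof -
  have "0 \<le> (f (prepend False x) - f (prepend True x))\<^sup>2" by simp
  then show ?thesis unfolding Ruelle_def by (simp add: power2_eq_square field_simps)
qed

lemma E_L2: "ew w \<in> L2"
  by (rule bdd_L2[OF ew_meas ew_bound])

lemma u_L2: "(\<lambda>x. ew w (shift x)) \<in> L2"
  by (rule koop_L2[OF E_L2])

lemma a_L2: "Ruelle (ew w) \<in> L2"
  by (rule ruelle_L2[OF E_L2])

lemma EE: "L2_inner (ew w) (ew w) = 1"
  using ew_int_sq[of w] unfolding L2_inner_def by (simp add: power2_eq_square)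

lemma uu: "L2_inner (\<lambda>x. ew w (shift x)) (\<lambda>x. ew w (shift x)) = 1"
  using koop_int(2)[of "\<lambda>y. ew w y * ew w y"] EE[of w] unfolding L2_inner_def by simp

lemma Ea: "L2_inner (ew w) (Ruelle (ew w)) = 0"
  unfolding L2_inner_def by (rule ew_orth[OF dep_ruelle[OF dep_ew]])

lemma aE: "L2_inner (Ruelle (ew w)) (ew w) = 0"
  using Ea[of w] unfolding L2_inner_def by (simp add: mult.commute)

lemma uE: "L2_inner (\<lambda>x. ew w (shift x)) (ew w) = 0"
  using adj1[OF E_L2 E_L2] Ea by simp

lemma Eu: "L2_inner (ew w) (\<lambda>x. ew w (shift x)) = 0"
  using uE[of w] unfolding L2_inner_def by (simp add: mult.commute)

lemma aa: "L2_inner (Ruelle (ew w)) (Ruelle (ew w)) \<le> 1"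
proof -
  have i1: "integrable mme (\<lambda>x. Ruelle (ew w) x * Ruelle (ew w) x)" using L2_prod[OF a_L2 a_L2] .
  have i2: "integrable mme (Ruelle (\<lambda>x. (ew w x)\<^sup>2))"
    using lemmaR(1)[of "\<lambda>x. (ew w x)\<^sup>2"] L2_sq[OF E_L2] by simp
  have "L2_inner (Ruelle (ew w)) (Ruelle (ew w)) \<le> integral\<^sup>L mme (Ruelle (\<lambda>x. (ew w x)\<^sup>2))"
    unfolding L2_inner_def
    by (rule integral_mono[OF i1 i2]) (metis power2_eq_square ruelle_sq_le)
  also have "\<dots> = 1"
    using lemmaR(2)[of "\<lambda>x. (ew w x)\<^sup>2"] L2_sq[OF E_L2] ew_int_sq by simp
  finally show ?thesis .
qed

lemma TK_eq:
  assumes "\<phi> \<in> L2"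
  shows "(\<lambda>x. Koop (proj_ew w \<phi>) x - proj_ew w (Koop \<phi>) x) =
    (\<lambda>x. L2_inner \<phi> (ew w) * ew w (shift x) - L2_inner \<phi> (Ruelle (ew w)) * ew w x)"
proof -
  have "Koop \<phi> = (\<lambda>x. \<phi> (shift x))" by (simp add: Koop_def o_def)
  then show ?thesis
    using adj1[OF assms E_L2] by (simp add: proj_ew_def Koop_def)
qed

lemma TR_eq:
  assumes "\<phi> \<in> L2"
  shows "(\<lambda>x. Ruelle (proj_ew w \<phi>) x - proj_ew w (Ruelle \<phi>) x) =
    (\<lambda>x. L2_inner \<phi> (ew w) * Ruelle (ew w) x - L2_inner \<phi> (\<lambda>x. ew w (shift x)) * ew w x)"
proof -
  have "Ruelle (proj_ew w \<phi>) = (\<lambda>x. L2_inner \<phi> (ew w) * Ruelle (ew w) x)"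
    by (simp add: proj_ew_def Ruelle_def fun_eq_iff field_simps)
  then show ?thesis
    using adj2[OF assms E_L2] by (simp add: proj_ew_def)
qed

lemma TK_norm:
  assumes "\<phi> \<in> L2"
  shows "(L2_norm (\<lambda>x. Koop (proj_ew w \<phi>) x - proj_ew w (Koop \<phi>) x))\<^sup>2 =
     (L2_inner \<phi> (ew w))\<^sup>2 + (L2_inner \<phi> (Ruelle (ew w)))\<^sup>2"
  unfolding TK_eq[OF assms] using norm_comb[OF u_L2 E_L2 uE EE] uu by simp

lemma TR_norm:
  assumes "\<phi> \<in> L2"
  shows "(L2_norm (\<lambda>x. Ruelle (proj_ew w \<phi>) x - proj_ew w (Ruelle \<phi>) x))\<^sup>2 =
     (L2_inner \<phi> (ew w))\<^sup>2 * L2_inner (Ruelle (ew w)) (Ruelle (ew w)) + (L2_inner \<phi> (\<lambda>x. ew w (shift x)))\<^sup>2"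
  unfolding TR_eq[OF assms] using norm_comb[OF a_L2 E_L2 aE EE] by simp

lemma TK_le:
  assumes "\<phi> \<in> L2"
  shows "(L2_norm (\<lambda>x. Koop (proj_ew w \<phi>) x - proj_ew w (Koop \<phi>) x))\<^sup>2 \<le> (L2_norm \<phi>)\<^sup>2"
  unfolding TK_norm[OF assms] norm_sq
  by (rule bessel[OF assms E_L2 a_L2 EE Ea aa])

lemma TR_le:
  assumes "\<phi> \<in> L2"
  shows "(L2_norm (\<lambda>x. Ruelle (proj_ew w \<phi>) x - proj_ew w (Ruelle \<phi>) x))\<^sup>2 \<le> (L2_norm \<phi>)\<^sup>2"
proof -
  have b: "(L2_inner \<phi> (ew w))\<^sup>2 + (L2_inner \<phi> (\<lambda>x. ew w (shift x)))\<^sup>2 \<le> L2_inner \<phi> \<phi>"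
    by (rule bessel[OF assms E_L2 u_L2 EE Eu]) (simp add: uu)
  have "(L2_inner \<phi> (ew w))\<^sup>2 * L2_inner (Ruelle (ew w)) (Ruelle (ew w)) \<le> (L2_inner \<phi> (ew w))\<^sup>2"
    using aa[of w] by (simp add: mult_left_le)
  then show ?thesis unfolding TR_norm[OF assms] norm_sq using b by linarith
qed

lemma L2_norm_nonneg: "0 \<le> L2_norm f"
  by (simp add: L2_norm_def)

lemma norm_from_sq: "(L2_norm f)\<^sup>2 = 1 \<Longrightarrow> L2_norm f = 1"
  using L2_norm_nonneg[of f] by (metis abs_of_nonneg power2_eq_1_iff abs_1 real_sqrt_abs real_sqrt_one power2_eq_square)

lemma E_norm: "L2_norm (ew w) = 1"
  by (rule norm_from_sq) (simp add: norm_sq EE)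

lemma u_norm: "L2_norm (\<lambda>x. ew w (shift x)) = 1"
  by (rule norm_from_sq) (simp add: norm_sq uu)

lemma TK_E: "L2_norm (\<lambda>x. Koop (proj_ew w (ew w)) x - proj_ew w (Koop (ew w)) x) = 1"
  by (rule norm_from_sq) (simp add: TK_norm[OF E_L2] EE Ea)

lemma TR_u: "L2_norm (\<lambda>x. Ruelle (proj_ew w (\<lambda>x. ew w (shift x))) x - proj_ew w (Ruelle (\<lambda>x. ew w (shift x))) x) = 1"
  by (rule norm_from_sq) (simp add: TR_norm[OF u_L2] uE uu)

lemma le_from_sq: "(L2_norm f)\<^sup>2 \<le> (L2_norm g)\<^sup>2 \<Longrightarrow> L2_norm f \<le> L2_norm g"
  by (rule power2_le_imp_le[OF _ L2_norm_nonneg])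


lemma zero_L2: "(\<lambda>x. 0) \<in> L2" using const_L2[of 0] .

lemma zero_norm: "L2_norm (\<lambda>x. 0) = 0" by (simp add: L2_norm_def)

lemma zero_inner: "L2_inner (\<lambda>x. 0) g = 0" by (simp add: L2_inner_def)

lemma sup_one:
  assumes "z \<in> L2" "L2_norm z \<le> 1" "L2_norm (T z) = 1"
    and "\<And>\<phi>. \<phi> \<in> L2 \<Longrightarrow> L2_norm \<phi> \<le> 1 \<Longrightarrow> L2_norm (T \<phi>) \<le> 1"
  shows "opnorm T = 1"
  unfolding opnorm_def
proof (rule cSup_eq_maximum)
  show "1 \<in> {L2_norm (T \<phi>) |\<phi>. \<phi> \<in> L2 \<and> L2_norm \<phi> \<le> 1}"
    using assms(1-3) by force
  show "\<And>y. y \<in> {L2_norm (T \<phi>) |\<phi>. \<phi> \<in> L2 \<and> L2_norm \<phi> \<le> 1} \<Longrightarrow> y \<le> 1"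
    using assms(4) by blast
qed

lemma opK: "opnorm (\<lambda>\<phi> x. Koop (proj_ew w \<phi>) x - proj_ew w (Koop \<phi>) x) = 1"
proof (rule sup_one[where T="\<lambda>\<phi> x. Koop (proj_ew w \<phi>) x - proj_ew w (Koop \<phi>) x", OF E_L2 _ TK_E])
  show "L2_norm (ew w) \<le> 1" by (simp add: E_norm)
  fix \<phi> :: "seq \<Rightarrow> real" assume "\<phi> \<in> L2" "L2_norm \<phi> \<le> 1"
  then show "L2_norm (\<lambda>x. Koop (proj_ew w \<phi>) x - proj_ew w (Koop \<phi>) x) \<le> 1"
    using le_from_sq[OF TK_le] by (meson order_trans)
qed

lemma opR: "opnorm (\<lambda>\<phi> x. Ruelle (proj_ew w \<phi>) x - proj_ew w (Ruelle \<phi>) x) = 1"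
proof (rule sup_one[where T="\<lambda>\<phi> x. Ruelle (proj_ew w \<phi>) x - proj_ew w (Ruelle \<phi>) x", OF u_L2 _ TR_u])
  show "L2_norm (\<lambda>x. ew w (shift x)) \<le> 1" by (simp add: u_norm)
  fix \<phi> :: "seq \<Rightarrow> real" assume "\<phi> \<in> L2" "L2_norm \<phi> \<le> 1"
  then show "L2_norm (\<lambda>x. Ruelle (proj_ew w \<phi>) x - proj_ew w (Ruelle \<phi>) x) \<le> 1"
    using le_from_sq[OF TR_le] by (meson order_trans)
qed

lemma Hcomm_eq: "H_comm Dirac (rep (proj_ew w)) p =
  ((\<lambda>x. Koop (proj_ew w (snd p)) x - proj_ew w (Koop (snd p)) x),
   (\<lambda>x. Ruelle (proj_ew w (fst p)) x - proj_ew w (Ruelle (fst p)) x))"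
  by (simp add: H_comm_def Let_def Dirac_def rep_def)

lemma opH: "H_opnorm (H_comm Dirac (rep (proj_ew w))) = 1"
  unfolding H_opnorm_def
proof (rule cSup_eq_maximum)
  let ?p = "((\<lambda>x. 0) :: seq \<Rightarrow> real, ew w)"
  have "(L2_norm (\<lambda>x. Ruelle (proj_ew w (\<lambda>x. 0)) x - proj_ew w (Ruelle (\<lambda>x. 0)) x))\<^sup>2 = 0"
    by (simp add: TR_norm[OF zero_L2] zero_inner)
  then have "H_norm (H_comm Dirac (rep (proj_ew w)) ?p) = 1"
    unfolding Hcomm_eq H_norm_def by (simp add: TK_E)
  moreover have "H_norm ?p \<le> 1" by (simp add: H_norm_def zero_norm E_norm)
  ultimately show "1 \<in> {H_norm (H_comm Dirac (rep (proj_ew w)) p) |p. fst p \<in> L2 \<and> snd p \<in> L2 \<and> H_norm p \<le> 1}"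
    using zero_L2 E_L2[of w] by force
  show "\<And>y. y \<in> {H_norm (H_comm Dirac (rep (proj_ew w)) p) |p. fst p \<in> L2 \<and> snd p \<in> L2 \<and> H_norm p \<le> 1} \<Longrightarrow> y \<le> 1"
  proof -
    fix y assume "y \<in> {H_norm (H_comm Dirac (rep (proj_ew w)) p) |p. fst p \<in> L2 \<and> snd p \<in> L2 \<and> H_norm p \<le> 1}"
    then obtain p where y: "y = H_norm (H_comm Dirac (rep (proj_ew w)) p)"
      and p: "fst p \<in> L2" "snd p \<in> L2" "H_norm p \<le> 1" by blast
    have "y \<le> H_norm p"
      unfolding y Hcomm_eq H_norm_def fst_conv snd_conv
      using TK_le[OF p(2), of w] TR_le[OF p(1), of w] by (intro real_sqrt_le_mono) simp
    then show "y \<le> 1" using p(3) by simp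
  qed
qed

theorem theorem2p4:
  fixes w :: "bool list"
  assumes "length w \<ge> 2"
  shows "opnorm (\<lambda>\<phi> x. Koop (proj_ew w \<phi>) x - proj_ew w (Koop \<phi>) x) = 1 \<and>
         opnorm (\<lambda>\<phi> x. Ruelle (proj_ew w \<phi>) x - proj_ew w (Ruelle \<phi>) x) = 1 \<and>
         H_opnorm (H_comm Dirac (rep (proj_ew w))) = 1"
  using opK opR opH by blast


end
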